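(* If $\tilde y\in\mathbb{R}^{\mathcal{A}}$ satisfies $\phi_\lambda(\tilde y)<0$ for some $\lambda\in\Lambda_X(\mathcal{A})$, then $\exp\tilde y\notin C_X(\mathcal{A})^*$ (with $\exp$ applied entrywise).
   Context: $X\subset\mathbb{R}^n$ is a nonempty closed convex set and $\mathcal{A}\subset\mathbb{R}^n$ is a nonempty finite set such that the functions $x\mapsto\exp(\alpha^Tx)$, $\alpha\in\mathcal{A}$, are linearly independent on $X$. $\mathbb{R}^{\mathcal{A}}$ denotes real vectors indexed by $\mathcal{A}$. $\mathcal{A}\nu=\sum_\alpha\alpha\nu_\alpha$. $\sigma_X(y)=\sup\{y^Tx:x\in X\}$. $N_\beta=\{\nu\in\mathbb{R}^{\mathcal{A}}:\nu_\alpha\ge0\ \forall\alpha\neq\beta,\ \sum_\alpha\nu_\alpha=0\}$. A vector $\nu^\star\in N_\beta$ is an $X$-circuit of $\mathcal{A}$ if (1) $\nu^\star\neq0$, (2) $\sigma_X(-\mathcal{A}\nu^\star)<\infty$, and (3) $\nu^\star$ cannot be written as a convex combination of two non-proportional vectors $\nu^{(1)},\nu^{(2)}\in N_\beta$ such that the map $\nu\mapsto\sigma_X(-\mathcal{A}\nu)$ is affine on the segment $[\nu^{(1)},\nu^{(2)}]$. $\Lambda_X(\mathcal{A})$ is the set of all $X$-circuits $\lambda$ (over all $\beta\in\mathcal{A}$) normalized so that the unique negative entry equals $-1$. The functional form of $\lambda$ is the affine function $\phi_\lambda(y)=\sum_\alpha y_\alpha\lambda_\alpha+\sigma_X(-\mathcal{A}\lambda)$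 on $\mathbb{R}^{\mathcal{A}}$. Signomials $f=\sum_\alpha c_\alpha\mathrm{e}^\alpha$, $\mathrm{e}^\alpha(x)=\exp(\alpha^Tx)$, are identified with $c\in\mathbb{R}^{\mathcal{A}}$; $C_X(\mathcal{A},\beta)$ is the set of $c$ with $f$ nonnegative on $X$ and $c_\alpha\ge0$ for $\alpha\ne\beta$; $C_X(\mathcal{A})=\sum_{\beta\in\mathcal{A}}C_X(\mathcal{A},\beta)$, and $C_X(\mathcal{A})^*=\{v\in\mathbb{R}^{\mathcal{A}}:v^Tc\ge0\ \forall c\in C_X(\mathcal{A})\}$. *)

theory Defs
  imports "HOL-Analysis.Analysis"
begin

text \<open>Vectors in R^A are functions on the exponent space; only entries on A matter
  (circuits/cone elements are required to vanish outside A).\<close>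

definition supp_in :: "(real^'n) set \<Rightarrow> (real^'n \<Rightarrow> real) \<Rightarrow> bool" where
  "supp_in A v \<longleftrightarrow> (\<forall>\<alpha>. \<alpha> \<notin> A \<longrightarrow> v \<alpha> = 0)"

definition Amul :: "(real^'n) set \<Rightarrow> (real^'n \<Rightarrow> real) \<Rightarrow> real^'n" where
  "Amul A \<nu> = (\<Sum>\<alpha>\<in>A. \<nu> \<alpha> *\<^sub>R \<alpha>)"

definition support_fun :: "(real^'n) set \<Rightarrow> real^'n \<Rightarrow> ereal" where
  "support_fun X y = (SUP x\<in>X. ereal (y \<bullet> x))"

definition Ncone :: "(real^'n) set \<Rightarrow> real^'n \<Rightarrow> (real^'n \<Rightarrow> real) set" where
  "Ncone A \<beta> = {\<nu>. supp_in A \<nu> \<and> (\<forall>\<alpha>\<in>A. \<alpha> \<noteq> \<beta> \<longrightarrow> \<nu> \<alpha> \<ge> 0) \<and> (\<Sum>\<alpha>\<in>A. \<nu> \<alpha>) = 0}"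

definition proportional :: "(real^'n) set \<Rightarrow> (real^'n \<Rightarrow> real) \<Rightarrow> (real^'n \<Rightarrow> real) \<Rightarrow> bool" where
  "proportional A u v \<longleftrightarrow> (\<exists>t::real. \<forall>\<alpha>\<in>A. u \<alpha> = t * v \<alpha>) \<or> (\<exists>t::real. \<forall>\<alpha>\<in>A. v \<alpha> = t * u \<alpha>)"

definition affine_on_segment ::
  "(real^'n) set \<Rightarrow> (real^'n) set \<Rightarrow> (real^'n \<Rightarrow> real) \<Rightarrow> (real^'n \<Rightarrow> real) \<Rightarrow> bool" where
  "affine_on_segment X A \<nu>1 \<nu>2 \<longleftrightarrow>
     (\<exists>a b :: real. \<forall>t\<in>{0..1::real}.
        support_fun X (- Amul A (\<lambda>\<alpha>. (1 - t) * \<nu>1 \<alpha> + t * \<nu>2 \<alpha>)) = ereal (a + b * t))"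

definition X_circuit ::
  "(real^'n) set \<Rightarrow> (real^'n) set \<Rightarrow> real^'n \<Rightarrow> (real^'n \<Rightarrow> real) \<Rightarrow> bool" where
  "X_circuit X A \<beta> \<nu> \<longleftrightarrow>
     \<beta> \<in> A \<and> \<nu> \<in> Ncone A \<beta> \<and> (\<exists>\<alpha>\<in>A. \<nu> \<alpha> \<noteq> 0) \<and>
     support_fun X (- Amul A \<nu>) < \<infinity> \<and>
     \<not> (\<exists>\<nu>1 \<nu>2 \<theta>. \<nu>1 \<in> Ncone A \<beta> \<and> \<nu>2 \<in> Ncone A \<beta> \<and> \<not> proportional A \<nu>1 \<nu>2 \<and>
           0 < \<theta> \<and> \<theta> < 1 \<and> (\<forall>\<alpha>\<in>A. \<nu> \<alpha> = \<theta> * \<nu>1 \<alpha> + (1 - \<theta>) * \<nu>2 \<alpha>) \<and>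
           affine_on_segment X A \<nu>1 \<nu>2)"

definition Lambda_X :: "(real^'n) set \<Rightarrow> (real^'n) set \<Rightarrow> (real^'n \<Rightarrow> real) set" where
  "Lambda_X X A = {lam. \<exists>\<beta>\<in>A. X_circuit X A \<beta> lam \<and> lam \<beta> = -1}"

definition phi :: "(real^'n) set \<Rightarrow> (real^'n) set \<Rightarrow> (real^'n \<Rightarrow> real) \<Rightarrow> (real^'n \<Rightarrow> real) \<Rightarrow> ereal" where
  "phi X A lam y = ereal (\<Sum>\<alpha>\<in>A. y \<alpha> * lam \<alpha>) + support_fun X (- Amul A lam)"

definition signomial :: "(real^'n) set \<Rightarrow> (real^'n \<Rightarrow> real) \<Rightarrow> real^'n \<Rightarrow> real" where
  "signomial A c x = (\<Sum>\<alpha>\<in>A. c \<alpha> * exp (\<alpha> \<bullet> x))"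

definition SAGE_cone_beta ::
  "(real^'n) set \<Rightarrow> (real^'n) set \<Rightarrow> real^'n \<Rightarrow> (real^'n \<Rightarrow> real) set" where
  "SAGE_cone_beta X A \<beta> = {c. supp_in A c \<and> (\<forall>\<alpha>\<in>A. \<alpha> \<noteq> \<beta> \<longrightarrow> c \<alpha> \<ge> 0) \<and>
                             (\<forall>x\<in>X. signomial A c x \<ge> 0)}"

definition SAGE_cone :: "(real^'n) set \<Rightarrow> (real^'n) set \<Rightarrow> (real^'n \<Rightarrow> real) set" where
  "SAGE_cone X A = {c. \<exists>f. (\<forall>\<beta>\<in>A. f \<beta> \<in> SAGE_cone_beta X A \<beta>) \<and>
                          c = (\<lambda>\<alpha>. \<Sum>\<beta>\<in>A. f \<beta> \<alpha>)}"

definition dual_cone :: "(real^'n) set \<Rightarrow> (real^'n \<Rightarrow> real) set \<Rightarrow> (real^'n \<Rightarrow> real) set" where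
  "dual_cone A C = {v. \<forall>c\<in>C. (\<Sum>\<alpha>\<in>A. v \<alpha> * c \<alpha>) \<ge> 0}"

end

theory Submission
  imports Defs
begin

theorem lemma5p13:
  fixes X A :: "(real^'n) set" and y :: "real^'n \<Rightarrow> real" and lam :: "real^'n \<Rightarrow> real"
  assumes "X \<noteq> {}" and "closed X" and "convex X"
    and "finite A" and "A \<noteq> {}"
    and "\<forall>c. (\<forall>x\<in>X. signomial A c x = 0) \<longrightarrow> (\<forall>\<alpha>\<in>A. c \<alpha> = 0)"
    and "lam \<in> Lambda_X X A"
    and "phi X A lam y < 0"
  shows "(\<lambda>\<alpha>. exp (y \<alpha>)) \<notin> dual_cone A (SAGE_cone X A)"
proof
  assume dual: "(\<lambda>\<alpha>. exp (y \<alpha>)) \<in> dual_cone A (SAGE_cone X A)"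
  obtain \<beta> where b: "\<beta> \<in> A" "X_circuit X A \<beta> lam" "lam \<beta> = -1"
    using assms(7) unfolding Lambda_X_def by blast
  have fin: "finite A" by fact
  have N: "lam \<in> Ncone A \<beta>" and sfin: "support_fun X (- Amul A lam) < \<infinity>"
    using b(2) unfolding X_circuit_def by auto
  have nonneg: "\<And>\<alpha>. \<alpha> \<in> A - {\<beta>} \<Longrightarrow> lam \<alpha> \<ge> 0" using N unfolding Ncone_def by auto
  have sum0: "(\<Sum>\<alpha>\<in>A. lam \<alpha>) = 0" using N unfolding Ncone_def by auto
  define Ab where "Ab = A - {\<beta>}"
  have finAb: "finite Ab" using fin Ab_def by auto
  have splitA: "\<And>g::real^'n\<Rightarrow>'b::comm_monoid_add. sum g A = g \<beta> + sum g Ab"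
    unfolding Ab_def using b(1) fin by (simp add: sum.remove)
  have sum1: "(\<Sum>\<alpha>\<in>Ab. lam \<alpha>) = 1" using sum0 splitA[of lam] b(3) by simp
  have Abne: "Ab \<noteq> {}" using sum1 by auto
  obtain x0 where x0: "x0 \<in> X" using assms(1) by blast
  have lowb: "ereal ((- Amul A lam) \<bullet> x0) \<le> support_fun X (- Amul A lam)"
    unfolding support_fun_def using x0 by (rule SUP_upper)
  then have "support_fun X (- Amul A lam) \<noteq> -\<infinity>" by auto
  with sfin obtain s where s: "support_fun X (- Amul A lam) = ereal s"
    by (cases "support_fun X (- Amul A lam)") auto
  have ub: "\<And>x. x \<in> X \<Longrightarrow> (- Amul A lam) \<bullet> x \<le> s"
  proof -
    fix x assume "x \<in> X"
    then have "ereal ((- Amul A lam) \<bullet> x) \<le> support_fun X (- Amul A lam)"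
      unfolding support_fun_def by (rule SUP_upper)
    then show "(- Amul A lam) \<bullet> x \<le> s" using s by simp
  qed
  define L where "L = (\<Sum>\<alpha>\<in>Ab. lam \<alpha> * y \<alpha>)"
  define K where "K = exp (- s - L)"
  define c where "c = (\<lambda>\<alpha>. if \<alpha> \<in> Ab then lam \<alpha> * exp (- y \<alpha>) else if \<alpha> = \<beta> then - K else 0)"
  have bnAb: "\<beta> \<notin> Ab" unfolding Ab_def by auto
  have Amul_eq: "\<And>x. Amul A lam \<bullet> x = (\<Sum>\<alpha>\<in>Ab. lam \<alpha> * ((\<alpha> - \<beta>) \<bullet> x))"
  proof -
    fix x
    have "Amul A lam \<bullet> x = (\<Sum>\<alpha>\<in>A. lam \<alpha> * (\<alpha> \<bullet> x))"
      unfolding Amul_def by (simp add: inner_sum_left)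
    also have "\<dots> = - (\<beta> \<bullet> x) + (\<Sum>\<alpha>\<in>Ab. lam \<alpha> * (\<alpha> \<bullet> x))"
      using splitA[of "\<lambda>\<alpha>. lam \<alpha> * (\<alpha> \<bullet> x)"] b(3) by simp
    also have "\<dots> = (\<Sum>\<alpha>\<in>Ab. lam \<alpha> * ((\<alpha> - \<beta>) \<bullet> x))"
      using sum1 by (simp add: inner_diff_left right_diff_distrib sum_subtractf
          flip: sum_distrib_right)
    finally show "Amul A lam \<bullet> x = (\<Sum>\<alpha>\<in>Ab. lam \<alpha> * ((\<alpha> - \<beta>) \<bullet> x))" .
  qed
  have cB: "c \<in> SAGE_cone_beta X A \<beta>"
    unfolding SAGE_cone_beta_def
  proof (intro CollectI conjI ballI impI)
    show "supp_in A c" unfolding supp_in_def c_def Ab_def using b(1) by auto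
  next
    fix \<alpha> assume "\<alpha> \<in> A" "\<alpha> \<noteq> \<beta>"
    then have "\<alpha> \<in> Ab" unfolding Ab_def by auto
    then show "0 \<le> c \<alpha>" unfolding c_def using nonneg Ab_def by auto
  next
    fix x assume xX: "x \<in> X"
    have sig: "signomial A c x = - K * exp (\<beta> \<bullet> x) + (\<Sum>\<alpha>\<in>Ab. lam \<alpha> * exp (- y \<alpha>) * exp (\<alpha> \<bullet> x))"
      unfolding signomial_def using splitA[of "\<lambda>\<alpha>. c \<alpha> * exp (\<alpha> \<bullet> x)"] bnAb
      by (simp add: c_def)
    have jen: "exp (\<Sum>\<alpha>\<in>Ab. lam \<alpha> * ((\<alpha> - \<beta>) \<bullet> x - y \<alpha>))
        \<le> (\<Sum>\<alpha>\<in>Ab. lam \<alpha> * exp ((\<alpha> - \<beta>) \<bullet> x - y \<alpha>))"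
      using convex_on_sum[OF finAb Abne exp_convex sum1, of "\<lambda>\<alpha>. (\<alpha> - \<beta>) \<bullet> x - y \<alpha>"]
        nonneg unfolding Ab_def by simp
    have lhs: "(\<Sum>\<alpha>\<in>Ab. lam \<alpha> * ((\<alpha> - \<beta>) \<bullet> x - y \<alpha>)) = Amul A lam \<bullet> x - L"
      unfolding Amul_eq L_def by (simp add: right_diff_distrib sum_subtractf)
    have "K \<le> exp (Amul A lam \<bullet> x - L)"
      unfolding K_def using ub[OF xX] by simp
    also have "\<dots> \<le> (\<Sum>\<alpha>\<in>Ab. lam \<alpha> * exp ((\<alpha> - \<beta>) \<bullet> x - y \<alpha>))" using jen lhs by simp
    finally have "K * exp (\<beta> \<bullet> x) \<le> (\<Sum>\<alpha>\<in>Ab. lam \<alpha> * exp ((\<alpha> - \<beta>) \<bullet> x - y \<alpha>)) * exp (\<beta> \<bullet> x)"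
      by simp
    also have "\<dots> = (\<Sum>\<alpha>\<in>Ab. lam \<alpha> * exp (- y \<alpha>) * exp (\<alpha> \<bullet> x))"
      unfolding sum_distrib_right
    proof (rule sum.cong[OF refl])
      fix \<alpha>
      have "exp ((\<alpha> - \<beta>) \<bullet> x - y \<alpha>) * exp (\<beta> \<bullet> x) = exp (- y \<alpha>) * exp (\<alpha> \<bullet> x)"
        by (simp add: inner_diff_left flip: exp_add)
      then show "lam \<alpha> * exp ((\<alpha> - \<beta>) \<bullet> x - y \<alpha>) * exp (\<beta> \<bullet> x) = lam \<alpha> * exp (- y \<alpha>) * exp (\<alpha> \<bullet> x)"
        by (metis mult.assoc)
    qed
    finally show "0 \<le> signomial A c x" using sig by simp
  qed
  have zB: "\<And>\<gamma>. (\<lambda>_. 0) \<in> SAGE_cone_beta X A \<gamma>"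
    unfolding SAGE_cone_beta_def supp_in_def signomial_def by simp
  have "c \<in> SAGE_cone X A"
    unfolding SAGE_cone_def
  proof (intro CollectI exI conjI)
    let ?f = "\<lambda>\<gamma>. if \<gamma> = \<beta> then c else (\<lambda>_. 0)"
    show "\<forall>\<gamma>\<in>A. ?f \<gamma> \<in> SAGE_cone_beta X A \<gamma>" using cB zB by auto
    show "c = (\<lambda>\<alpha>. \<Sum>\<gamma>\<in>A. ?f \<gamma> \<alpha>)"
    proof
      fix \<alpha>
      have "(\<Sum>\<gamma>\<in>A. ?f \<gamma> \<alpha>) = (\<Sum>\<gamma>\<in>A. if \<gamma> = \<beta> then c \<alpha> else 0)"
        by (rule sum.cong) auto
      also have "\<dots> = c \<alpha>" using b(1) fin by (simp add: sum.delta)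
      finally show "c \<alpha> = (\<Sum>\<gamma>\<in>A. ?f \<gamma> \<alpha>)" by simp
    qed
  qed
  with dual have ge: "(\<Sum>\<alpha>\<in>A. exp (y \<alpha>) * c \<alpha>) \<ge> 0" unfolding dual_cone_def by blast
  have "(\<Sum>\<alpha>\<in>A. exp (y \<alpha>) * c \<alpha>) = - exp (y \<beta>) * K + (\<Sum>\<alpha>\<in>Ab. lam \<alpha>)"
    using splitA[of "\<lambda>\<alpha>. exp (y \<alpha>) * c \<alpha>"] bnAb
    by (simp add: c_def exp_minus field_simps)
  also have "\<dots> = 1 - exp (y \<beta> - s - L)" using sum1 by (simp add: K_def flip: exp_add)
  finally have eq: "(\<Sum>\<alpha>\<in>A. exp (y \<alpha>) * c \<alpha>) = 1 - exp (y \<beta> - s - L)" .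
  have "phi X A lam y = ereal (- y \<beta> + L + s)"
    unfolding phi_def s L_def using splitA[of "\<lambda>\<alpha>. y \<alpha> * lam \<alpha>"] b(3)
    by (simp add: mult.commute)
  with assms(8) have "- y \<beta> + L + s < 0" by simp
  then have "exp (y \<beta> - s - L) > 1" by simp
  with ge eq show False by simp
qed

end
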